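(* If $C\subseteq\mathbb{R}$ is infinite and $C\neq\mathbb{R}$, then there is a two-point selection $f$ on $\mathbb{R}$ such that $C$ is not closed in the topology $\tau_f$.
   Context: A two-point selection on $\mathbb{R}$ is a function $f$ from the set of two-element subsets of $\mathbb{R}$ to $\mathbb{R}$ with $f(F)\in F$. Write $r<_f s$ if $f(\{r,s\})=r$ ($r\ne s$), $(\leftarrow,r)_f=\{x: x<_f r\}$, $(r,\rightarrow)_f=\{x: r<_f x\}$. The topology $\tau_f$ on $\mathbb{R}$ is generated (as a subbase) by all sets $(\leftarrow,r)_f$, $(r,\rightarrow)_f$, $r\in\mathbb{R}$. *)

theory Defs
  imports "HOL-Analysis.Analysis"
begin

definition two_point_selection :: "(real set \<Rightarrow> real) \<Rightarrow> bool" where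
  "two_point_selection f \<longleftrightarrow> (\<forall>F. card F = 2 \<longrightarrow> f F \<in> F)"

definition sel_less :: "(real set \<Rightarrow> real) \<Rightarrow> real \<Rightarrow> real \<Rightarrow> bool" where
  "sel_less f r s \<longleftrightarrow> r \<noteq> s \<and> f {r, s} = r"

definition sel_left_ray :: "(real set \<Rightarrow> real) \<Rightarrow> real \<Rightarrow> real set" where
  "sel_left_ray f r = {x. sel_less f x r}"

definition sel_right_ray :: "(real set \<Rightarrow> real) \<Rightarrow> real \<Rightarrow> real set" where
  "sel_right_ray f r = {x. sel_less f r x}"

definition sel_topology :: "(real set \<Rightarrow> real) \<Rightarrow> real topology" where
  "sel_topology f = topology_generated_by
     ((\<lambda>r. sel_left_ray f r) ` UNIV \<union> (\<lambda>r. sel_right_ray f r) ` UNIV)"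

end

theory Submission
  imports Defs
begin

theorem theorem3p14:
  fixes C :: "real set"
  assumes "infinite C" and "C \<noteq> UNIV"
  shows "\<exists>f. two_point_selection f \<and> \<not> closedin (sel_topology f) C"
proof -
  obtain p where pC: "p \<notin> C" using assms(2) by blast
  obtain c :: "nat \<Rightarrow> real" where injc: "inj c" and rc: "range c \<subseteq> C"
    using infinite_countable_subset[OF assms(1)] by blast
  define h where "h x = (if x = p then 0 else if x \<in> range c then 1 / (real (inv c x) + 1) else (2::real))" for x
  have hc: "h (c m) = 1 / (real m + 1)" for m
    using pC rc injc by (auto simp: h_def)
  have hpos: "x \<noteq> p \<Longrightarrow> h x > 0" for x by (auto simp: h_def)
  have hp: "h p = 0" by (simp add: h_def)
  define less where "less x y \<longleftrightarrow> h x < h y \<or> (h x = h y \<and> x < y)" for x y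
  define f where "f F = (SOME x. x \<in> F \<and> (\<forall>y\<in>F. y \<noteq> x \<longrightarrow> less x y))" for F
  have fxy: "f {x, y} = (if less x y then x else y)" if "x \<noteq> y" for x y
  proof -
    let ?z = "if less x y then x else y"
    have z: "?z \<in> {x,y} \<and> (\<forall>w\<in>{x,y}. w \<noteq> ?z \<longrightarrow> less ?z w)"
      using that by (auto simp: less_def)
    have u: "z' = ?z" if "z' \<in> {x,y} \<and> (\<forall>w\<in>{x,y}. w \<noteq> z' \<longrightarrow> less z' w)" for z'
      using that \<open>x \<noteq> y\<close> by (auto simp: less_def)
    show ?thesis unfolding f_def by (rule some_equality[where P="\<lambda>z'. z' \<in> {x,y} \<and> (\<forall>w\<in>{x,y}. w \<noteq> z' \<longrightarrow> less z' w)", OF z u])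
  qed
  have sl: "sel_less f x y \<longleftrightarrow> x \<noteq> y \<and> less x y" for x y
    using fxy[of x y] by (cases "less x y") (auto simp: sel_less_def)
  have tps: "two_point_selection f"
    unfolding two_point_selection_def
  proof (intro allI impI)
    fix F :: "real set" assume "card F = 2"
    then obtain x y where "x \<noteq> y" "F = {x, y}" by (meson card_2_iff)
    then show "f F \<in> F" using fxy by auto
  qed
  define S where "S = (\<lambda>r. sel_left_ray f r) ` UNIV \<union> (\<lambda>r. sel_right_ray f r) ` UNIV"
  have key: "generate_topology_on S U \<Longrightarrow> p \<in> U \<Longrightarrow> \<exists>N. \<forall>m\<ge>N. c m \<in> U" for U
  proof (induction rule: generate_topology_on.induct)
    case Empty then show ?case by simp
  next
    case (Int a b)
    then obtain N1 N2 where "\<forall>m\<ge>N1. c m \<in> a" "\<forall>m\<ge>N2. c m \<in> b" by auto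
    then show ?case by (intro exI[of _ "max N1 N2"]) auto
  next
    case (UN K)
    then obtain k where "k \<in> K" "p \<in> k" by auto
    with UN.IH obtain N where "\<forall>m\<ge>N. c m \<in> k" by blast
    then show ?case using \<open>k \<in> K\<close> by blast
  next
    case (Basis s)
    then consider r where "s = sel_left_ray f r" | r where "s = sel_right_ray f r"
      unfolding S_def by blast
    then show ?case
    proof cases
      case 1
      with Basis have "sel_less f p r" by (simp add: sel_left_ray_def)
      then have "r \<noteq> p" by (simp add: sel_less_def)
      then have hr: "h r > 0" using hpos by blast
      obtain N :: nat where N: "1 / (real N + 1) < h r"
      proof -
        obtain n :: nat where "inverse (real (Suc n)) < h r" using reals_Archimedean[OF hr] by blast
        then show ?thesis using that[of n] by (simp add: inverse_eq_divide add.commute)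
      qed
      have "c m \<in> s" if "m \<ge> N" for m
      proof -
        have "1 / (real m + 1) \<le> 1 / (real N + 1)"
          using that by (intro divide_left_mono) auto
        then have "h (c m) < h r" using N hc by simp
        then show ?thesis using 1 sl by (auto simp: sel_left_ray_def less_def)
      qed
      then show ?thesis by blast
    next
      case 2
      with Basis have "sel_less f r p" by (simp add: sel_right_ray_def)
      then have "r \<noteq> p" "less r p" using sl by auto
      then show ?thesis using hpos[of r] hp by (auto simp: less_def)
    qed
  qed
  have "\<not> closedin (sel_topology f) C"
  proof
    assume cl: "closedin (sel_topology f) C"
    have "sel_less f p (p+1)" using sl hpos hp by (simp add: less_def)
    then have "p \<in> sel_left_ray f (p+1)" by (simp add: sel_left_ray_def)
    then have "p \<in> topspace (sel_topology f)" unfolding sel_topology_def by auto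
    moreover have "openin (sel_topology f) (topspace (sel_topology f) - C)"
      using cl closedin_def by blast
    ultimately obtain N where "\<forall>m\<ge>N. c m \<in> topspace (sel_topology f) - C"
      using key pC unfolding sel_topology_def openin_topology_generated_by_iff S_def by blast
    then show False using rc by blast
  qed
  then show ?thesis using tps by blast
qed

end
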